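(* Let $\mathrm{f}$ be a chief factor function, $G$ a finite group, $K\trianglelefteq G$, and $H/T$ a chief factor of $G$ with $K\le T$. Define normal subgroups $Z_1\le Z_2$ of $G$ containing $K$ by $Z_1/K=\mathrm{Z}(G/K,\mathrm{f})\cap T/K$ and $Z_2/K=\mathrm{Z}(G/K,\mathrm{f})\cap H/K$. Then $Z_2\ne Z_1$ if and only if $\mathrm{f}(H/T,G)=1$ and there exists $Z\trianglelefteq G$ with $Z_1\le Z$ such that $H/Z_1=T/Z_1\times Z/Z_1$. Moreover, in this case $Z_2=Z$.
   Context: A chief factor function is a function $\mathrm{f}$ assigning $0$ or $1$ to every pair $(H/K,G)$ with $G$ a finite group and $H/K$ a chief factor of $G$, such that: (1) $\mathrm{f}(H/K,G)=\mathrm{f}(M/N,G)$ whenever $H/K$ and $M/N$ are $G$-isomorphic chief factors of $G$; (2) $\mathrm{f}(H/K,G)=\mathrm{f}((H/N)/(K/N),G/N)$ for every $N\trianglelefteq G$ with $N\le K$. $\mathrm{Z}(G,\mathrm{f})$ denotes the greatest normal subgroup of $G$ such that $\mathrm{f}(H/K,G)=1$ for every chief factor $H/K$ of $G$ with $H\le \mathrm{Z}(G,\mathrm{f})$. *)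

theory Defs
  imports "HOL-Algebra.Algebra"
begin

definition chief_factor :: "('a,'b) monoid_scheme \<Rightarrow> 'a set \<Rightarrow> 'a set \<Rightarrow> bool" where
  "chief_factor G H K \<longleftrightarrow> normal H G \<and> normal K G \<and> K \<subset> H \<and>
     \<not> (\<exists>N. normal N G \<and> K \<subset> N \<and> N \<subset> H)"

definition conj_set :: "('a,'b) monoid_scheme \<Rightarrow> 'a \<Rightarrow> 'a set \<Rightarrow> 'a set" where
  "conj_set G g C = (\<lambda>c. g \<otimes>\<^bsub>G\<^esub> c \<otimes>\<^bsub>G\<^esub> inv\<^bsub>G\<^esub> g) ` C"

definition G_isomorphic :: "('a,'b) monoid_scheme \<Rightarrow> 'a set \<Rightarrow> 'a set \<Rightarrow> 'a set \<Rightarrow> 'a set \<Rightarrow> bool" where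
  "G_isomorphic G H K M N \<longleftrightarrow>
     (\<exists>\<phi>. \<phi> \<in> iso (G\<lparr>carrier := H\<rparr> Mod K) (G\<lparr>carrier := M\<rparr> Mod N) \<and>
        (\<forall>g\<in>carrier G. \<forall>C\<in>carrier (G\<lparr>carrier := H\<rparr> Mod K).
            \<phi> (conj_set G g C) = conj_set G g (\<phi> C)))"

definition quot_img :: "('a,'b) monoid_scheme \<Rightarrow> 'a set \<Rightarrow> 'a set \<Rightarrow> 'a set set" where
  "quot_img G N A = (\<lambda>a. N #>\<^bsub>G\<^esub> a) ` A"

text \<open>Condition (1) of a chief factor function, together with values in {0,1},
  for the restriction of f to finite groups whose elements have a fixed type.\<close>
definition cff_level :: "(('a,'b) monoid_scheme \<Rightarrow> 'a set \<Rightarrow> 'a set \<Rightarrow> nat) \<Rightarrow> bool" where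
  "cff_level f \<longleftrightarrow>
     (\<forall>G H K. group G \<and> finite (carrier G) \<and> chief_factor G H K \<longrightarrow> f G H K \<in> {0, 1}) \<and>
     (\<forall>G H K M N. group G \<and> finite (carrier G) \<and> chief_factor G H K \<and> chief_factor G M N \<and>
         G_isomorphic G H K M N \<longrightarrow> f G H K = f G M N)"

text \<open>Condition (2) of a chief factor function, linking f on groups G with f on
  quotient groups G/N (the quotient lives in the type of sets).\<close>
definition cff_link :: "(('a,'b) monoid_scheme \<Rightarrow> 'a set \<Rightarrow> 'a set \<Rightarrow> nat) \<Rightarrow>
     ('a set monoid \<Rightarrow> 'a set set \<Rightarrow> 'a set set \<Rightarrow> nat) \<Rightarrow> bool" where
  "cff_link f fq \<longleftrightarrow>
     (\<forall>G N H K. group G \<and> finite (carrier G) \<and> normal N G \<and> N \<subseteq> K \<and> chief_factor G H K \<longrightarrow>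
        f G H K = fq (G Mod N) (quot_img G N H) (quot_img G N K))"

definition Zf :: "('a,'b) monoid_scheme \<Rightarrow> (('a,'b) monoid_scheme \<Rightarrow> 'a set \<Rightarrow> 'a set \<Rightarrow> nat) \<Rightarrow> 'a set" where
  "Zf G f = (GREATEST Z. normal Z G \<and>
       (\<forall>H K. chief_factor G H K \<and> H \<subseteq> Z \<longrightarrow> f G H K = 1))"

end

theory Submission
  imports Defs
begin

context group begin

lemma rcos_eq_iff:
  assumes "subgroup N G" "a \<in> carrier G" "b \<in> carrier G"
  shows "N #> a = N #> b \<longleftrightarrow> a \<otimes> inv b \<in> N"
proof
  assume "N #> a = N #> b"
  then have "a \<in> N #> b" using rcos_self[OF assms(2,1)] by simp
  then show "a \<otimes> inv b \<in> N" using subgroup.rcos_module_imp[OF assms(1) is_group assms(3)] by blast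
next
  assume "a \<otimes> inv b \<in> N"
  then have "a \<in> N #> b" using subgroup.rcos_module_rev[OF assms(1) is_group assms(3) assms(2)] by blast
  then show "N #> a = N #> b" using repr_independence[OF _ assms(3,1)] by simp
qed

lemma canc1: "g \<in> carrier G \<Longrightarrow> z \<in> carrier G \<Longrightarrow> inv g \<otimes> (g \<otimes> z) = z"
  by (simp add: m_assoc[symmetric])
lemma canc2: "g \<in> carrier G \<Longrightarrow> z \<in> carrier G \<Longrightarrow> g \<otimes> (inv g \<otimes> z) = z"
  by (simp add: m_assoc[symmetric])

lemma set_multI: "a \<in> A \<Longrightarrow> b \<in> B \<Longrightarrow> a \<otimes> b \<in> A <#> B"
  unfolding set_mult_def by blast

lemma set_multE: "x \<in> A <#> B \<Longrightarrow> (\<And>a b. a \<in> A \<Longrightarrow> b \<in> B \<Longrightarrow> x = a \<otimes> b \<Longrightarrow> P) \<Longrightarrow> P"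
  unfolding set_mult_def by blast

lemma sm_sub_left: assumes "subgroup B G" "A \<subseteq> carrier G" shows "A \<subseteq> A <#> B"
proof
  fix a assume a: "a \<in> A"
  then have "a = a \<otimes> \<one>" using assms(2) by auto
  then show "a \<in> A <#> B" using set_multI[OF a subgroup.one_closed[OF assms(1)]] by simp
qed

lemma sm_sub_right: assumes "subgroup A G" "B \<subseteq> carrier G" shows "B \<subseteq> A <#> B"
proof
  fix b assume b: "b \<in> B"
  then have "b = \<one> \<otimes> b" using assms(2) by auto
  then show "b \<in> A <#> B" using set_multI[OF subgroup.one_closed[OF assms(1)] b] by simp
qed

lemma sm_closed: assumes "subgroup K G" "A \<subseteq> K" "B \<subseteq> K" shows "A <#> B \<subseteq> K"
  using assms by (auto elim!: set_multE intro: subgroup.m_closed)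

lemma sm_absorb: assumes "subgroup K G" "subgroup N G" "N \<subseteq> K" shows "K <#> N = K"
  using sm_closed[OF assms(1) order_refl assms(3)] sm_sub_left[OF assms(2) subgroup.subset[OF assms(1)]]
  by blast

lemma sm_absorb2: assumes "subgroup K G" "subgroup N G" "N \<subseteq> K" shows "N <#> K = K"
  using sm_closed[OF assms(1) assms(3) order_refl] sm_sub_right[OF assms(2) subgroup.subset[OF assms(1)]]
  by blast
end


context group begin

lemma dedekind:
  assumes "subgroup A G" "subgroup B G" "subgroup C G" "A \<subseteq> C"
  shows "(A <#> B) \<inter> C = A <#> (B \<inter> C)"
proof
  show "(A <#> B) \<inter> C \<subseteq> A <#> (B \<inter> C)"
  proof
    fix x assume "x \<in> (A <#> B) \<inter> C"
    then obtain a b where ab: "a \<in> A" "b \<in> B" "x = a \<otimes> b" "x \<in> C" by (blast elim: set_multE)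
    have ac: "a \<in> carrier G" "b \<in> carrier G" using subgroup.mem_carrier[OF assms(1) ab(1)] subgroup.mem_carrier[OF assms(2) ab(2)] by auto
    have e: "inv a \<otimes> x = b" using ab(3) ac by (simp add: m_assoc[symmetric])
    have "a \<in> C" using assms(4) ab(1) by blast
    then have "inv a \<in> C" by (rule subgroup.m_inv_closed[OF assms(3)])
    then have "inv a \<otimes> x \<in> C" using ab(4) by (rule subgroup.m_closed[OF assms(3)])
    then have "b \<in> B \<inter> C" using e ab(2) by simp
    from set_multI[OF ab(1) this] show "x \<in> A <#> (B \<inter> C)" using ab(3) by simp
  qed
next
  show "A <#> (B \<inter> C) \<subseteq> (A <#> B) \<inter> C"
  proof
    fix x assume "x \<in> A <#> (B \<inter> C)"
    then obtain a b where ab: "a \<in> A" "b \<in> B" "b \<in> C" "x = a \<otimes> b" by (blast elim: set_multE)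
    have "x \<in> A <#> B" using set_multI[OF ab(1,2)] ab(4) by simp
    moreover have "x \<in> C" using subgroup.m_closed[OF assms(3) _ ab(3)] ab(1) assms(4) ab(4) by blast
    ultimately show "x \<in> (A <#> B) \<inter> C" by blast
  qed
qed

lemma conj_rcos:
  assumes "Q \<lhd> G" "g \<in> carrier G" "m \<in> carrier G"
  shows "conj_set G g (Q #> m) = Q #> (g \<otimes> m \<otimes> inv g)"
proof -
  have Xc: "Q \<subseteq> carrier G" using assms(1) normal_imp_subgroup subgroup.subset by blast
  show ?thesis
  proof
    show "conj_set G g (Q #> m) \<subseteq> Q #> (g \<otimes> m \<otimes> inv g)"
    proof
      fix y assume "y \<in> conj_set G g (Q #> m)"
      then obtain x where x: "x \<in> Q" "y = g \<otimes> (x \<otimes> m) \<otimes> inv g"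
        unfolding conj_set_def r_coset_def by blast
      have xc: "x \<in> carrier G" using x Xc by blast
      have "y = (g \<otimes> x \<otimes> inv g) \<otimes> (g \<otimes> m \<otimes> inv g)"
        using x xc assms by (simp add: m_assoc canc1)
      moreover have "g \<otimes> x \<otimes> inv g \<in> Q" using normal.inv_op_closed2[OF assms(1)] x assms by blast
      ultimately show "y \<in> Q #> (g \<otimes> m \<otimes> inv g)" unfolding r_coset_def by blast
    qed
  next
    show "Q #> (g \<otimes> m \<otimes> inv g) \<subseteq> conj_set G g (Q #> m)"
    proof
      fix y assume "y \<in> Q #> (g \<otimes> m \<otimes> inv g)"
      then obtain z where z: "z \<in> Q" "y = z \<otimes> (g \<otimes> m \<otimes> inv g)"
        unfolding r_coset_def by blast
      have zc: "z \<in> carrier G" using z Xc by blast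
      define x where "x = inv g \<otimes> z \<otimes> g"
      have xX: "x \<in> Q" unfolding x_def using normal.inv_op_closed1[OF assms(1)] z assms by blast
      have "y = g \<otimes> (x \<otimes> m) \<otimes> inv g"
        using z zc assms unfolding x_def by (simp add: m_assoc canc1 canc2)
      then show "y \<in> conj_set G g (Q #> m)" using xX unfolding conj_set_def r_coset_def by blast
    qed
  qed
qed

lemma carrier_sub_Mod: "carrier (G\<lparr>carrier := M\<rparr> Mod N) = (\<lambda>m. N #> m) ` M"
  by (auto simp: FactGroup_def RCOSETS_def)

lemma G_iso_lemma:
  assumes M: "M \<lhd> G" and N: "N \<lhd> G" and H: "H \<lhd> G" and K: "K \<lhd> G"
    and MH: "M \<subseteq> H" and NMK: "N = M \<inter> K" and HKM: "H \<subseteq> K <#> M"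
  shows "G_isomorphic G M N H K"
proof -
  have sM: "subgroup M G" and sN: "subgroup N G" and sH: "subgroup H G" and sK: "subgroup K G"
    using assms normal_imp_subgroup by blast+
  have Mc: "M \<subseteq> carrier G" "N \<subseteq> carrier G" "H \<subseteq> carrier G" "K \<subseteq> carrier G"
    using sM sN sH sK subgroup.subset by blast+
  define \<phi> where "\<phi> = (\<lambda>C. K <#> C)"
  have KN: "K <#> N = K" using sm_absorb[OF sK sN] NMK by blast
  have phi_rc: "\<phi> (N #> m) = K #> m" if "m \<in> carrier G" for m
  proof -
    have "\<phi> (N #> m) = (K <#> N) #> m" unfolding \<phi>_def using setmult_rcos_assoc Mc that by simp
    then show ?thesis using KN by simp
  qed
  have car1: "carrier (G\<lparr>carrier := M\<rparr> Mod N) = (\<lambda>m. N #> m) ` M" by (rule carrier_sub_Mod)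
  have car2: "carrier (G\<lparr>carrier := H\<rparr> Mod K) = (\<lambda>m. K #> m) ` H" by (rule carrier_sub_Mod)
  have mult1: "\<And>Q R. Q \<otimes>\<^bsub>G\<lparr>carrier := M\<rparr> Mod N\<^esub> R = Q <#> R" by simp
  have mult2: "\<And>Q R. Q \<otimes>\<^bsub>G\<lparr>carrier := H\<rparr> Mod K\<^esub> R = Q <#> R" by simp
  have hom: "\<phi> \<in> hom (G\<lparr>carrier := M\<rparr> Mod N) (G\<lparr>carrier := H\<rparr> Mod K)"
  proof (rule homI)
    fix Q assume "Q \<in> carrier (G\<lparr>carrier := M\<rparr> Mod N)"
    then obtain m where m: "m \<in> M" "Q = N #> m" using car1 by blast
    have "m \<in> carrier G" "m \<in> H" using m Mc MH by auto
    then show "\<phi> Q \<in> carrier (G\<lparr>carrier := H\<rparr> Mod K)" using car2 phi_rc m by auto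
  next
    fix Q R assume "Q \<in> carrier (G\<lparr>carrier := M\<rparr> Mod N)" "R \<in> carrier (G\<lparr>carrier := M\<rparr> Mod N)"
    note QR = this
    obtain a where a: "a \<in> M" "Q = N #> a" using QR(1) car1 by auto
    obtain b where b: "b \<in> M" "R = N #> b" using QR(2) car1 by auto
    note ab = a b
    have ac: "a \<in> carrier G" "b \<in> carrier G" using ab Mc by auto
    have "\<phi> (Q \<otimes>\<^bsub>G\<lparr>carrier := M\<rparr> Mod N\<^esub> R) = \<phi> (N #> (a \<otimes> b))"
      using ab ac normal.rcos_sum[OF N] by simp
    also have "\<dots> = K #> (a \<otimes> b)" using phi_rc ac by simp
    also have "\<dots> = (K #> a) <#> (K #> b)" using normal.rcos_sum[OF K] ac by simp
    also have "\<dots> = \<phi> Q \<otimes>\<^bsub>G\<lparr>carrier := H\<rparr> Mod K\<^esub> \<phi> R" using ab ac phi_rc by simp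
    finally show "\<phi> (Q \<otimes>\<^bsub>G\<lparr>carrier := M\<rparr> Mod N\<^esub> R) = \<phi> Q \<otimes>\<^bsub>G\<lparr>carrier := H\<rparr> Mod K\<^esub> \<phi> R" .
  qed
  have inj: "inj_on \<phi> (carrier (G\<lparr>carrier := M\<rparr> Mod N))"
  proof (rule inj_onI)
    fix Q R assume "Q \<in> carrier (G\<lparr>carrier := M\<rparr> Mod N)" "R \<in> carrier (G\<lparr>carrier := M\<rparr> Mod N)"
      and eq: "\<phi> Q = \<phi> R"
    note QR = this
    obtain a where a: "a \<in> M" "Q = N #> a" using QR(1) car1 by auto
    obtain b where b: "b \<in> M" "R = N #> b" using QR(2) car1 by auto
    note ab = a b
    have ac: "a \<in> carrier G" "b \<in> carrier G" using ab Mc by auto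
    have "K #> a = K #> b" using eq ab ac phi_rc by simp
    then have "a \<otimes> inv b \<in> K" using rcos_eq_iff[OF sK ac] by simp
    moreover have "a \<otimes> inv b \<in> M" using ab sM by (simp add: subgroup.m_closed subgroup.m_inv_closed)
    ultimately have "a \<otimes> inv b \<in> N" using NMK by simp
    then show "Q = R" using rcos_eq_iff[OF sN ac] ab by simp
  qed
  have surj: "\<phi> ` carrier (G\<lparr>carrier := M\<rparr> Mod N) = carrier (G\<lparr>carrier := H\<rparr> Mod K)"
  proof
    show "\<phi> ` carrier (G\<lparr>carrier := M\<rparr> Mod N) \<subseteq> carrier (G\<lparr>carrier := H\<rparr> Mod K)"
      using hom unfolding hom_def by auto
  next
    show "carrier (G\<lparr>carrier := H\<rparr> Mod K) \<subseteq> \<phi> ` carrier (G\<lparr>carrier := M\<rparr> Mod N)"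
    proof
      fix R assume "R \<in> carrier (G\<lparr>carrier := H\<rparr> Mod K)"
      then obtain h where h: "h \<in> H" "R = K #> h" using car2 by blast
      then obtain k m where km: "k \<in> K" "m \<in> M" "h = k \<otimes> m" using HKM by (blast elim: set_multE)
      have kc: "k \<in> carrier G" "m \<in> carrier G" using km Mc by auto
      have "K #> h = (K #> k) #> m" using km kc coset_mult_assoc Mc by simp
      also have "\<dots> = K #> m" using subgroup.rcos_const[OF sK is_group km(1)] by simp
      finally have "R = \<phi> (N #> m)" using h phi_rc kc by simp
      then show "R \<in> \<phi> ` carrier (G\<lparr>carrier := M\<rparr> Mod N)" using car1 km by blast
    qed
  qed
  have conj: "\<phi> (conj_set G g C) = conj_set G g (\<phi> C)"
    if g: "g \<in> carrier G" and C: "C \<in> carrier (G\<lparr>carrier := M\<rparr> Mod N)" for g C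
  proof -
    obtain m where m: "m \<in> M" "C = N #> m" using C car1 by blast
    have mc: "m \<in> carrier G" using m Mc by auto
    have gc: "g \<otimes> m \<otimes> inv g \<in> carrier G" using g mc by simp
    have "\<phi> (conj_set G g C) = \<phi> (N #> (g \<otimes> m \<otimes> inv g))" using conj_rcos[OF N g mc] m by simp
    also have "\<dots> = K #> (g \<otimes> m \<otimes> inv g)" using phi_rc gc by simp
    also have "\<dots> = conj_set G g (K #> m)" using conj_rcos[OF K g mc] by simp
    also have "\<dots> = conj_set G g (\<phi> C)" using phi_rc mc m by simp
    finally show ?thesis .
  qed
  show ?thesis unfolding G_isomorphic_def
    using hom inj surj conj unfolding iso_def bij_betw_def by blast
qed

end


definition hc :: "('a,'b) monoid_scheme \<Rightarrow> (('a,'b) monoid_scheme \<Rightarrow> 'a set \<Rightarrow> 'a set \<Rightarrow> nat) \<Rightarrow> 'a set \<Rightarrow> bool" where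
  "hc G f Z \<longleftrightarrow> normal Z G \<and> (\<forall>H K. chief_factor G H K \<and> H \<subseteq> Z \<longrightarrow> f G H K = 1)"

lemma Zf_hc: "Zf G f = (GREATEST Z. hc G f Z)"
  unfolding Zf_def hc_def by simp

lemma chief_cases:
  assumes "chief_factor G H K" "N \<lhd> G" "K \<subseteq> N" "N \<subseteq> H"
  shows "N = K \<or> N = H"
  using assms unfolding chief_factor_def by blast

lemma chiefD:
  assumes "chief_factor G H K"
  shows "H \<lhd> G" "K \<lhd> G" "K \<subseteq> H" "K \<noteq> H"
  using assms unfolding chief_factor_def by auto

context group begin

lemma nsub: "N \<lhd> G \<Longrightarrow> subgroup N G" by (rule normal_imp_subgroup)
lemma ncar: "N \<lhd> G \<Longrightarrow> N \<subseteq> carrier G" using normal_imp_subgroup subgroup.subset by blast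

lemma chief_restrict:
  assumes cf: "chief_factor G H K" and C: "C \<lhd> G" and HKC: "H \<subseteq> K <#> C"
  shows "chief_factor G (H \<inter> C) (K \<inter> C) \<and> G_isomorphic G (H \<inter> C) (K \<inter> C) H K"
proof -
  note cd = chiefD[OF cf]
  have sH: "subgroup H G" and sK: "subgroup K G" and sC: "subgroup C G"
    using nsub cd C by auto
  have Kc: "K \<subseteq> carrier G" using ncar cd by auto
  have nHC: "H \<inter> C \<lhd> G" by (rule normal_subgroup_intersect[OF cd(1) C])
  have nKC: "K \<inter> C \<lhd> G" by (rule normal_subgroup_intersect[OF cd(2) C])
  have "(K <#> C) \<inter> H = K <#> (C \<inter> H)" by (rule dedekind[OF sK sC sH cd(3)])
  then have H_eq: "H = K <#> (H \<inter> C)" using HKC by (simp add: Int_commute inf.absorb_iff2)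
  have iso: "G_isomorphic G (H \<inter> C) (K \<inter> C) H K"
  proof (rule G_iso_lemma[OF nHC nKC cd(1) cd(2)])
    show "H \<inter> C \<subseteq> H" by blast
    show "K \<inter> C = H \<inter> C \<inter> K" using cd(3) by blast
    show "H \<subseteq> K <#> (H \<inter> C)" using H_eq by simp
  qed
  have strict: "K \<inter> C \<noteq> H \<inter> C"
  proof
    assume e: "K \<inter> C = H \<inter> C"
    have "K <#> (K \<inter> C) \<subseteq> K" by (rule sm_closed[OF sK]) auto
    then have "H \<subseteq> K" using H_eq e by simp
    then show False using cd by blast
  qed
  have nobetween: "\<not> (\<exists>P. P \<lhd> G \<and> K \<inter> C \<subset> P \<and> P \<subset> H \<inter> C)"
  proof
    assume "\<exists>P. P \<lhd> G \<and> K \<inter> C \<subset> P \<and> P \<subset> H \<inter> C"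
    then obtain P where P: "P \<lhd> G" "K \<inter> C \<subset> P" "P \<subset> H \<inter> C" by blast
    have sP: "subgroup P G" using nsub P by auto
    have Pc: "P \<subseteq> carrier G" using ncar P by auto
    define Q where "Q = K <#> P"
    have nQ: "Q \<lhd> G" unfolding Q_def by (rule normal_subgroup_set_mult_closed[OF cd(2) P(1)])
    have KQ: "K \<subseteq> Q" unfolding Q_def by (rule sm_sub_left[OF sP Kc])
    have QH: "Q \<subseteq> H" unfolding Q_def by (rule sm_closed[OF sH cd(3)]) (use P in blast)
    from chief_cases[OF cf nQ KQ QH] show False
    proof
      assume "Q = K"
      moreover have "P \<subseteq> Q" unfolding Q_def by (rule sm_sub_right[OF sK Pc])
      ultimately have "P \<subseteq> K \<inter> C" using P by blast
      then show False using P by blast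
    next
      assume QHe: "Q = H"
      have "K <#> P = P <#> K" by (rule commut_normal[OF sK P(1)])
      then have "H \<inter> C = (P <#> K) \<inter> C" using QHe Q_def by simp
      also have "\<dots> = P <#> (K \<inter> C)" by (rule dedekind[OF sP sK sC]) (use P in blast)
      also have "\<dots> \<subseteq> P" by (rule sm_closed[OF sP]) (use P in blast)+
      finally show False using P by blast
    qed
  qed
  have sub: "K \<inter> C \<subseteq> H \<inter> C" using cd(3) by blast
  have "chief_factor G (H \<inter> C) (K \<inter> C)"
    unfolding chief_factor_def using nHC nKC sub strict nobetween by auto
  then show ?thesis using iso by blast
qed

lemma chief_lift:
  assumes cf: "chief_factor G H K" and A: "A \<lhd> G" and ns: "\<not> H \<subseteq> K <#> A"
  shows "chief_factor G (H <#> A) (K <#> A) \<and> G_isomorphic G H K (H <#> A) (K <#> A)"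
proof -
  note cd = chiefD[OF cf]
  have sH: "subgroup H G" and sK: "subgroup K G" and sA: "subgroup A G"
    using nsub cd A by auto
  have Kc: "K \<subseteq> carrier G" and Hc: "H \<subseteq> carrier G" and Ac: "A \<subseteq> carrier G" using ncar cd A by auto
  have nHA: "H <#> A \<lhd> G" by (rule normal_subgroup_set_mult_closed[OF cd(1) A])
  have nKA: "K <#> A \<lhd> G" by (rule normal_subgroup_set_mult_closed[OF cd(2) A])
  have KKA: "K \<subseteq> K <#> A" by (rule sm_sub_left[OF sA Kc])
  have AKA: "A \<subseteq> K <#> A" by (rule sm_sub_right[OF sK Ac])
  have HHA: "H \<subseteq> H <#> A" by (rule sm_sub_left[OF sA Hc])
  have nD: "H \<inter> (K <#> A) \<lhd> G" by (rule normal_subgroup_intersect[OF cd(1) nKA])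
  have "H \<inter> (K <#> A) = K \<or> H \<inter> (K <#> A) = H"
    by (rule chief_cases[OF cf nD]) (use cd KKA in blast)+
  then have D: "H \<inter> (K <#> A) = K" using ns by blast
  have HAeq: "H <#> A = A <#> H" by (rule commut_normal[OF sH A])
  have iso: "G_isomorphic G H K (H <#> A) (K <#> A)"
  proof (rule G_iso_lemma[OF cd(1) cd(2) nHA nKA HHA D[symmetric]])
    have "A <#> H \<subseteq> (K <#> A) <#> H" by (rule mono_set_mult[OF AKA order_refl])
    then show "H <#> A \<subseteq> K <#> A <#> H" using HAeq by simp
  qed
  have sub: "K <#> A \<subseteq> H <#> A" by (rule mono_set_mult[OF cd(3) order_refl])
  have strict: "K <#> A \<noteq> H <#> A" using HHA ns by blast
  have nobetween: "\<not> (\<exists>P. P \<lhd> G \<and> K <#> A \<subset> P \<and> P \<subset> H <#> A)"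
  proof
    assume "\<exists>P. P \<lhd> G \<and> K <#> A \<subset> P \<and> P \<subset> H <#> A"
    then obtain P where P: "P \<lhd> G" "K <#> A \<subset> P" "P \<subset> H <#> A" by blast
    have sP: "subgroup P G" using nsub P by auto
    define Q where "Q = P \<inter> H"
    have nQ: "Q \<lhd> G" unfolding Q_def by (rule normal_subgroup_intersect[OF P(1) cd(1)])
    have KQ: "K \<subseteq> Q" unfolding Q_def using KKA P cd by blast
    have QH: "Q \<subseteq> H" unfolding Q_def by blast
    from chief_cases[OF cf nQ KQ QH] show False
    proof
      assume "Q = H"
      then have "H \<subseteq> P" unfolding Q_def by blast
      moreover have "A \<subseteq> P" using AKA P by blast
      ultimately have "H <#> A \<subseteq> P" by (rule sm_closed[OF sP])
      then show False using P by blast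
    next
      assume QK: "Q = K"
      have "P = (A <#> H) \<inter> P" using P HAeq by blast
      also have "\<dots> = A <#> (H \<inter> P)" by (rule dedekind[OF sA sH sP]) (use AKA P in blast)
      also have "\<dots> = A <#> K" using QK unfolding Q_def by (simp add: Int_commute)
      also have "\<dots> = K <#> A" by (rule commut_normal[OF sK A, symmetric])
      finally show False using P by blast
    qed
  qed
  have "chief_factor G (H <#> A) (K <#> A)"
    unfolding chief_factor_def using nHA nKA sub strict nobetween by auto
  then show ?thesis using iso by blast
qed

lemma level_iso:
  assumes "cff_level f" "finite (carrier G)" "chief_factor G H K" "chief_factor G M N"
    "G_isomorphic G H K M N"
  shows "f G H K = f G M N"
  using assms is_group unfolding cff_level_def by blast

lemma hc_prod:
  assumes lev: "cff_level f" and fin: "finite (carrier G)"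
    and hA: "hc G f A" and hB: "hc G f B"
  shows "hc G f (A <#> B)"
proof -
  have nA: "A \<lhd> G" and nB: "B \<lhd> G" using hA hB unfolding hc_def by auto
  have sA: "subgroup A G" and sB: "subgroup B G" using nsub nA nB by auto
  have Ac: "A \<subseteq> carrier G" using ncar nA by auto
  have nAB: "A <#> B \<lhd> G" by (rule normal_subgroup_set_mult_closed[OF nA nB])
  have sAB: "subgroup (A <#> B) G" using nsub nAB by auto
  have fA: "\<And>H K. chief_factor G H K \<Longrightarrow> H \<subseteq> A \<Longrightarrow> f G H K = 1" using hA unfolding hc_def by blast
  have fB: "\<And>H K. chief_factor G H K \<Longrightarrow> H \<subseteq> B \<Longrightarrow> f G H K = 1" using hB unfolding hc_def by blast
  have "f G H K = 1" if cf: "chief_factor G H K" and HAB: "H \<subseteq> A <#> B" for H K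
  proof (cases "H \<subseteq> K <#> A")
    case True
    from chief_restrict[OF cf nA True]
    have c: "chief_factor G (H \<inter> A) (K \<inter> A)" and i: "G_isomorphic G (H \<inter> A) (K \<inter> A) H K" by auto
    have "f G (H \<inter> A) (K \<inter> A) = f G H K" by (rule level_iso[OF lev fin c cf i])
    moreover have "f G (H \<inter> A) (K \<inter> A) = 1" by (rule fA[OF c]) blast
    ultimately show ?thesis by simp
  next
    case False
    note cd = chiefD[OF cf]
    have Kc: "K \<subseteq> carrier G" using ncar cd by auto
    from chief_lift[OF cf nA False]
    have c: "chief_factor G (H <#> A) (K <#> A)" and i: "G_isomorphic G H K (H <#> A) (K <#> A)" by auto
    have e1: "f G H K = f G (H <#> A) (K <#> A)" by (rule level_iso[OF lev fin cf c i])
    have AAB: "A \<subseteq> A <#> B" by (rule sm_sub_left[OF sB Ac])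
    have "H <#> A \<subseteq> (A <#> B) <#> A" by (rule mono_set_mult[OF HAB order_refl])
    also have "\<dots> \<subseteq> A <#> B" by (rule sm_closed[OF sAB order_refl AAB])
    also have "\<dots> \<subseteq> (K <#> A) <#> B" by (rule mono_set_mult[OF sm_sub_right[OF nsub[OF cd(2)] Ac] order_refl])
    finally have HA: "H <#> A \<subseteq> (K <#> A) <#> B" .
    from chief_restrict[OF c nB HA]
    have c2: "chief_factor G ((H <#> A) \<inter> B) ((K <#> A) \<inter> B)"
      and i2: "G_isomorphic G ((H <#> A) \<inter> B) ((K <#> A) \<inter> B) (H <#> A) (K <#> A)" by auto
    have "f G ((H <#> A) \<inter> B) ((K <#> A) \<inter> B) = f G (H <#> A) (K <#> A)"
      by (rule level_iso[OF lev fin c2 c i2])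
    moreover have "f G ((H <#> A) \<inter> B) ((K <#> A) \<inter> B) = 1" by (rule fB[OF c2]) blast
    ultimately show ?thesis using e1 by simp
  qed
  then show ?thesis unfolding hc_def using nAB by blast
qed

lemma Zf_props:
  assumes lev: "cff_level f" and fin: "finite (carrier G)"
  shows "hc G f (Zf G f)" "\<And>Y. hc G f Y \<Longrightarrow> Y \<subseteq> Zf G f"
proof -
  define S where "S = {Z. hc G f Z}"
  have "S \<subseteq> Pow (carrier G)" unfolding S_def hc_def using ncar by blast
  then have finS: "finite S" using fin by (meson finite_Pow_iff finite_subset)
  have one: "hc G f {\<one>}"
    unfolding hc_def
  proof (intro conjI allI impI)
    show "{\<one>} \<lhd> G" by (rule one_is_normal)
    fix H K assume a: "chief_factor G H K \<and> H \<subseteq> {\<one>}"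
    note cd = chiefD[OF conjunct1[OF a]]
    have "\<one> \<in> K" using subgroup.one_closed[OF nsub[OF cd(2)]] .
    then have "H \<subseteq> K" using a by blast
    then show "f G H K = 1" using cd by blast
  qed
  then have "S \<noteq> {}" unfolding S_def by blast
  from finite_has_maximal[OF finS this] obtain m where m: "m \<in> S" "\<And>b. b \<in> S \<Longrightarrow> m \<subseteq> b \<Longrightarrow> m = b"
    by blast
  have hm: "hc G f m" using m S_def by blast
  have mc: "m \<subseteq> carrier G" using hm ncar unfolding hc_def by blast
  have upper: "y \<subseteq> m" if hy: "hc G f y" for y
  proof -
    have sy: "subgroup y G" using hy nsub unfolding hc_def by blast
    have yc: "y \<subseteq> carrier G" using hy ncar unfolding hc_def by blast
    have sm: "subgroup m G" using hm nsub unfolding hc_def by blast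
    have "hc G f (m <#> y)" by (rule hc_prod[OF lev fin hm hy])
    moreover have "m \<subseteq> m <#> y" by (rule sm_sub_left[OF sy mc])
    ultimately have "m = m <#> y" using m(2) S_def by blast
    moreover have "y \<subseteq> m <#> y" by (rule sm_sub_right[OF sm yc])
    ultimately show ?thesis by simp
  qed
  have "Zf G f = m" unfolding Zf_hc by (rule Greatest_equality[where P="hc G f", OF hm upper])
  then show "hc G f (Zf G f)" "\<And>Y. hc G f Y \<Longrightarrow> Y \<subseteq> Zf G f" using hm upper by auto
qed

end


context group begin

lemma rcos_in_img:
  assumes "subgroup Xs G" "N \<subseteq> Xs" "subgroup N G" "g \<in> carrier G"
  shows "(N #> g \<in> (\<lambda>x. N #> x) ` Xs) \<longleftrightarrow> g \<in> Xs"
proof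
  assume "N #> g \<in> (\<lambda>x. N #> x) ` Xs"
  then obtain x where x: "x \<in> Xs" "N #> g = N #> x" by blast
  have xc: "x \<in> carrier G" using subgroup.mem_carrier[OF assms(1) x(1)] .
  have "g \<otimes> inv x \<in> N" using rcos_eq_iff[OF assms(3) assms(4) xc] x(2) by simp
  then have "g \<otimes> inv x \<in> Xs" using assms(2) by blast
  then have "g \<otimes> inv x \<otimes> x \<in> Xs" by (rule subgroup.m_closed[OF assms(1) _ x(1)])
  moreover have "g \<otimes> inv x \<otimes> x = g" using xc assms(4) by (simp add: m_assoc)
  ultimately show "g \<in> Xs" by simp
next
  assume "g \<in> Xs"
  then show "N #> g \<in> (\<lambda>x. N #> x) ` Xs" by (rule imageI)
qed

lemma qi_int:
  assumes N: "N \<lhd> G" and A: "subgroup A G" and B: "subgroup B G" and NA: "N \<subseteq> A" and NB: "N \<subseteq> B"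
  shows "quot_img G N A \<inter> quot_img G N B = {\<one>\<^bsub>G Mod N\<^esub>} \<longleftrightarrow> A \<inter> B = N"
proof -
  have sN: "subgroup N G" using N by (rule normal_imp_subgroup)
  have one: "N #> \<one> = N" using ncar[OF N] by simp
  have oA: "N \<in> quot_img G N A" unfolding quot_img_def using subgroup.one_closed[OF A] one by force
  have oB: "N \<in> quot_img G N B" unfolding quot_img_def using subgroup.one_closed[OF B] one by force
  show ?thesis
  proof
    assume e: "quot_img G N A \<inter> quot_img G N B = {\<one>\<^bsub>G Mod N\<^esub>}"
    show "A \<inter> B = N"
    proof
      show "A \<inter> B \<subseteq> N"
      proof
        fix x assume x: "x \<in> A \<inter> B"
        have xc: "x \<in> carrier G" using x subgroup.mem_carrier[OF A] by blast
        have "N #> x \<in> quot_img G N A \<inter> quot_img G N B" unfolding quot_img_def using x by blast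
        then have "N #> x = N" using e by simp
        then show "x \<in> N" using coset_join1[OF _ xc sN] by blast
      qed
      show "N \<subseteq> A \<inter> B" using NA NB by blast
    qed
  next
    assume e: "A \<inter> B = N"
    show "quot_img G N A \<inter> quot_img G N B = {\<one>\<^bsub>G Mod N\<^esub>}"
    proof
      show "quot_img G N A \<inter> quot_img G N B \<subseteq> {\<one>\<^bsub>G Mod N\<^esub>}"
      proof
        fix y assume y: "y \<in> quot_img G N A \<inter> quot_img G N B"
        then obtain a where a: "a \<in> A" "y = N #> a" unfolding quot_img_def by blast
        have ac: "a \<in> carrier G" using a subgroup.mem_carrier[OF A] by blast
        have "N #> a \<in> (\<lambda>x. N #> x) ` B" using y a unfolding quot_img_def by blast
        then have "a \<in> B" using rcos_in_img[OF B NB sN ac] by simp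
        then have "a \<in> N" using a e by blast
        then have "N #> a = N" by (rule coset_join2[OF ac sN])
        then show "y \<in> {\<one>\<^bsub>G Mod N\<^esub>}" using a by simp
      qed
      show "{\<one>\<^bsub>G Mod N\<^esub>} \<subseteq> quot_img G N A \<inter> quot_img G N B" using oA oB by simp
    qed
  qed
qed

lemma qi_prod:
  assumes N: "N \<lhd> G" and Ac: "A \<subseteq> carrier G" and Bc: "B \<subseteq> carrier G"
  shows "quot_img G N A <#>\<^bsub>G Mod N\<^esub> quot_img G N B = quot_img G N (A <#> B)"
proof
  show "quot_img G N A <#>\<^bsub>G Mod N\<^esub> quot_img G N B \<subseteq> quot_img G N (A <#> B)"
  proof
    fix y assume "y \<in> quot_img G N A <#>\<^bsub>G Mod N\<^esub> quot_img G N B"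
    then obtain p q where pq: "p \<in> quot_img G N A" "q \<in> quot_img G N B" "y = p \<otimes>\<^bsub>G Mod N\<^esub> q"
      unfolding set_mult_def by blast
    then obtain a b where ab: "a \<in> A" "b \<in> B" "y = (N #> a) <#> (N #> b)"
      unfolding quot_img_def by auto
    have ac: "a \<in> carrier G" "b \<in> carrier G" using ab Ac Bc by auto
    have "y = N #> (a \<otimes> b)" using ab(3) normal.rcos_sum[OF N ac] by simp
    moreover have "a \<otimes> b \<in> A <#> B" by (rule set_multI[OF ab(1,2)])
    ultimately show "y \<in> quot_img G N (A <#> B)" unfolding quot_img_def by blast
  qed
next
  show "quot_img G N (A <#> B) \<subseteq> quot_img G N A <#>\<^bsub>G Mod N\<^esub> quot_img G N B"
  proof
    fix y assume "y \<in> quot_img G N (A <#> B)"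
    then obtain x where x: "x \<in> A <#> B" "y = N #> x" unfolding quot_img_def by blast
    then obtain a b where ab: "a \<in> A" "b \<in> B" "x = a \<otimes> b" by (blast elim: set_multE)
    have ac: "a \<in> carrier G" "b \<in> carrier G" using ab Ac Bc by auto
    have "y = (N #> a) \<otimes>\<^bsub>G Mod N\<^esub> (N #> b)" using ab(3) x(2) normal.rcos_sum[OF N ac] by simp
    moreover have "N #> a \<in> quot_img G N A" "N #> b \<in> quot_img G N B"
      unfolding quot_img_def using ab by auto
    ultimately show "y \<in> quot_img G N A <#>\<^bsub>G Mod N\<^esub> quot_img G N B"
      unfolding set_mult_def by blast
  qed
qed

lemma qi_inj:
  assumes N: "N \<lhd> G" and A: "subgroup A G" and B: "subgroup B G" and NA: "N \<subseteq> A" and NB: "N \<subseteq> B"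
  shows "quot_img G N A = quot_img G N B \<longleftrightarrow> A = B"
proof
  assume e: "quot_img G N A = quot_img G N B"
  have sN: "subgroup N G" using N by (rule normal_imp_subgroup)
  have "x \<in> B" if x: "x \<in> A" for x
  proof -
    have xc: "x \<in> carrier G" using x subgroup.mem_carrier[OF A] by blast
    have "N #> x \<in> (\<lambda>x. N #> x) ` B" using e x unfolding quot_img_def by blast
    then show ?thesis using rcos_in_img[OF B NB sN xc] by simp
  qed
  moreover have "x \<in> A" if x: "x \<in> B" for x
  proof -
    have xc: "x \<in> carrier G" using x subgroup.mem_carrier[OF B] by blast
    have "N #> x \<in> (\<lambda>x. N #> x) ` A" using e x unfolding quot_img_def by blast
    then show ?thesis using rcos_in_img[OF A NA sN xc] by simp
  qed
  ultimately show "A = B" by blast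
qed simp

end

lemma (in group_hom) pre_normal:
  assumes nN: "N \<lhd> H" shows "{x \<in> carrier G. h x \<in> N} \<lhd> G"
proof (rule G.normal_invI)
  have sN: "subgroup N H" using nN by (rule normal_imp_subgroup)
  show "subgroup {x \<in> carrier G. h x \<in> N} G"
  proof (rule G.subgroupI)
    show "{x \<in> carrier G. h x \<in> N} \<subseteq> carrier G" by blast
    have "h \<one> \<in> N" using hom_one subgroup.one_closed[OF sN] by simp
    then show "{x \<in> carrier G. h x \<in> N} \<noteq> {}" by blast
  next
    fix a assume a: "a \<in> {x \<in> carrier G. h x \<in> N}"
    then have "h (inv a) = inv\<^bsub>H\<^esub> (h a)" using hom_inv by blast
    moreover have "inv\<^bsub>H\<^esub> (h a) \<in> N" using a subgroup.m_inv_closed[OF sN] by blast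
    ultimately show "inv a \<in> {x \<in> carrier G. h x \<in> N}" using a by simp
  next
    fix a b assume a: "a \<in> {x \<in> carrier G. h x \<in> N}" and b: "b \<in> {x \<in> carrier G. h x \<in> N}"
    then have "h (a \<otimes> b) = h a \<otimes>\<^bsub>H\<^esub> h b" using hom_mult by blast
    moreover have "h a \<otimes>\<^bsub>H\<^esub> h b \<in> N" using a b subgroup.m_closed[OF sN] by blast
    ultimately show "a \<otimes> b \<in> {x \<in> carrier G. h x \<in> N}" using a b by simp
  qed
next
  fix x n assume x: "x \<in> carrier G" and n: "n \<in> {x \<in> carrier G. h x \<in> N}"
  have "h (x \<otimes> n \<otimes> inv x) = h x \<otimes>\<^bsub>H\<^esub> h n \<otimes>\<^bsub>H\<^esub> inv\<^bsub>H\<^esub> (h x)"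
    using x n by (simp add: hom_inv)
  moreover have "h x \<otimes>\<^bsub>H\<^esub> h n \<otimes>\<^bsub>H\<^esub> inv\<^bsub>H\<^esub> (h x) \<in> N"
    using normal.inv_op_closed2[OF nN] x n by simp
  ultimately show "x \<otimes> n \<otimes> inv x \<in> {x \<in> carrier G. h x \<in> N}" using x n by simp
qed



context group begin

lemma core:
  assumes lev: "cff_level f" and fin: "finite (carrier G)"
    and cf: "chief_factor G H T" and nW: "W \<lhd> G" and KW: "K \<subseteq> W" and KT: "K \<subseteq> T"
    and fW': "\<forall>A B. chief_factor G A B \<and> K \<subseteq> B \<and> A \<subseteq> W \<longrightarrow> f G A B = 1"
    and maxW': "\<forall>Y. Y \<lhd> G \<and> K \<subseteq> Y \<and>
        (\<forall>A B. chief_factor G A B \<and> K \<subseteq> B \<and> A \<subseteq> Y \<longrightarrow> f G A B = 1) \<longrightarrow> Y \<subseteq> W"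
  shows "W \<inter> H \<noteq> W \<inter> T \<Longrightarrow> f G H T = 1 \<and> (W \<inter> H) \<lhd> G \<and> W \<inter> T \<subseteq> W \<inter> H \<and>
            T \<inter> (W \<inter> H) = W \<inter> T \<and> T <#> (W \<inter> H) = H"
    and "\<And>Z. f G H T = 1 \<Longrightarrow> Z \<lhd> G \<Longrightarrow> W \<inter> T \<subseteq> Z \<Longrightarrow> T \<inter> Z = W \<inter> T \<Longrightarrow> T <#> Z = H
          \<Longrightarrow> W \<inter> H = Z \<and> W \<inter> H \<noteq> W \<inter> T"
proof -
  have fW: "f G A B = 1" if "chief_factor G A B" "K \<subseteq> B" "A \<subseteq> W" for A B
    using fW' that by blast
  have maxW: "Y \<subseteq> W" if "Y \<lhd> G" "K \<subseteq> Y"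
    "\<And>A B. chief_factor G A B \<Longrightarrow> K \<subseteq> B \<Longrightarrow> A \<subseteq> Y \<Longrightarrow> f G A B = 1" for Y
  proof -
    have "\<forall>A B. chief_factor G A B \<and> K \<subseteq> B \<and> A \<subseteq> Y \<longrightarrow> f G A B = 1" using that(3) by blast
    then show ?thesis using maxW' that(1,2) by blast
  qed
  note cd = chiefD[OF cf]
  have sH: "subgroup H G" and sT: "subgroup T G" and sW: "subgroup W G"
    using nsub cd nW by auto
  have Tc: "T \<subseteq> carrier G" and Wc: "W \<subseteq> carrier G" using ncar cd nW by auto
  have nZ2: "W \<inter> H \<lhd> G" by (rule normal_subgroup_intersect[OF nW cd(1)])
  have nZ1: "W \<inter> T \<lhd> G" by (rule normal_subgroup_intersect[OF nW cd(2)])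
  have sZ1: "subgroup (W \<inter> T) G" using nsub nZ1 by auto
  have Z2T: "T \<inter> (W \<inter> H) = W \<inter> T" using cd(3) by blast
  {
    assume ne: "W \<inter> H \<noteq> W \<inter> T"
    have nsubT: "\<not> W \<inter> H \<subseteq> T" using ne cd(3) by blast
    have sZ2: "subgroup (W \<inter> H) G" using nsub nZ2 by auto
    have Z2c: "W \<inter> H \<subseteq> carrier G" using ncar nZ2 by auto
    have nTZ: "T <#> (W \<inter> H) \<lhd> G" by (rule normal_subgroup_set_mult_closed[OF cd(2) nZ2])
    have T1: "T \<subseteq> T <#> (W \<inter> H)" by (rule sm_sub_left[OF sZ2 Tc])
    have T2: "T <#> (W \<inter> H) \<subseteq> H" by (rule sm_closed[OF sH cd(3)]) blast
    have T3: "W \<inter> H \<subseteq> T <#> (W \<inter> H)" by (rule sm_sub_right[OF sT Z2c])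
    have "T <#> (W \<inter> H) = T \<or> T <#> (W \<inter> H) = H" by (rule chief_cases[OF cf nTZ T1 T2])
    then have TZ2: "T <#> (W \<inter> H) = H" using T3 nsubT by auto
    have "H \<subseteq> T <#> W" using TZ2 mono_set_mult[of T T "W \<inter> H" W G] by blast
    from chief_restrict[OF cf nW this]
    have c: "chief_factor G (H \<inter> W) (T \<inter> W)" and i: "G_isomorphic G (H \<inter> W) (T \<inter> W) H T" by auto
    have "f G (H \<inter> W) (T \<inter> W) = f G H T" by (rule level_iso[OF lev fin c cf i])
    moreover have "f G (H \<inter> W) (T \<inter> W) = 1" by (rule fW[OF c]) (use KT KW in blast)+
    ultimately have "f G H T = 1" by simp
    then show "f G H T = 1 \<and> (W \<inter> H) \<lhd> G \<and> W \<inter> T \<subseteq> W \<inter> H \<and>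
            T \<inter> (W \<inter> H) = W \<inter> T \<and> T <#> (W \<inter> H) = H"
      using nZ2 cd(3) Z2T TZ2 by blast
  }
  fix Z assume f1: "f G H T = 1" and nZ: "Z \<lhd> G" and Z1Z: "W \<inter> T \<subseteq> Z" and TZ: "T \<inter> Z = W \<inter> T"
    and TZH: "T <#> Z = H"
  have sZ: "subgroup Z G" using nsub nZ by auto
  have Zc: "Z \<subseteq> carrier G" using ncar nZ by auto
  have ZH: "Z \<subseteq> H" using sm_sub_right[OF sT Zc] TZH by simp
  have HZ: "H \<inter> Z = Z" using ZH by blast
  from chief_restrict[OF cf nZ] TZH
  have c0: "chief_factor G Z (W \<inter> T)" and i0: "G_isomorphic G Z (W \<inter> T) H T"
    using HZ TZ by auto
  have fZ: "f G Z (W \<inter> T) = 1" using level_iso[OF lev fin c0 cf i0] f1 by simp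
  have ZW: "Z \<subseteq> W"
  proof (rule ccontr)
    assume nZW: "\<not> Z \<subseteq> W"
    have Z1W: "(W \<inter> T) <#> W = W" by (rule sm_absorb2[OF sW sZ1]) blast
    have "\<not> Z \<subseteq> (W \<inter> T) <#> W" using Z1W nZW by simp
    from chief_lift[OF c0 nW this] Z1W
    have cY: "chief_factor G (Z <#> W) W" and iY: "G_isomorphic G Z (W \<inter> T) (Z <#> W) W" by auto
    have fY: "f G (Z <#> W) W = 1" using level_iso[OF lev fin c0 cY iY] fZ by simp
    define Y where "Y = Z <#> W"
    have nY: "Y \<lhd> G" unfolding Y_def by (rule normal_subgroup_set_mult_closed[OF nZ nW])
    have sY: "subgroup Y G" using nsub nY by auto
    have WY: "W \<subseteq> Y" unfolding Y_def by (rule sm_sub_right[OF sZ Wc])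
    have ZY: "Z \<subseteq> Y" unfolding Y_def by (rule sm_sub_left[OF sW Zc])
    have "Y \<subseteq> W"
    proof (rule maxW[OF nY])
      show "K \<subseteq> Y" using KW WY by blast
      fix A B assume cAB: "chief_factor G A B" and KB: "K \<subseteq> B" and AY: "A \<subseteq> Y"
      note cdA = chiefD[OF cAB]
      show "f G A B = 1"
      proof (cases "A \<subseteq> B <#> W")
        case True
        from chief_restrict[OF cAB nW True]
        have c: "chief_factor G (A \<inter> W) (B \<inter> W)" and i: "G_isomorphic G (A \<inter> W) (B \<inter> W) A B" by auto
        have "f G (A \<inter> W) (B \<inter> W) = f G A B" by (rule level_iso[OF lev fin c cAB i])
        moreover have "f G (A \<inter> W) (B \<inter> W) = 1" by (rule fW[OF c]) (use KB KW in blast)+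
        ultimately show ?thesis by simp
      next
        case False
        have Bc: "B \<subseteq> carrier G" using ncar cdA by auto
        from chief_lift[OF cAB nW False]
        have c: "chief_factor G (A <#> W) (B <#> W)" and i: "G_isomorphic G A B (A <#> W) (B <#> W)" by auto
        note cdc = chiefD[OF c]
        have e1: "f G A B = f G (A <#> W) (B <#> W)" by (rule level_iso[OF lev fin cAB c i])
        have W1: "W \<subseteq> B <#> W" by (rule sm_sub_right[OF nsub[OF cdA(2)] Wc])
        have AWY: "A <#> W \<subseteq> Y" by (rule sm_closed[OF sY AY WY])
        have BWY: "B <#> W \<subseteq> Y" using cdc AWY by blast
        have "B <#> W = W \<or> B <#> W = Y" unfolding Y_def
          by (rule chief_cases[OF cY cdc(2)]) (use W1 BWY Y_def in auto)
        then have BW: "B <#> W = W" using cdc AWY by blast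
        have "A <#> W = W \<or> A <#> W = Y" unfolding Y_def
          by (rule chief_cases[OF cY cdc(1)]) (use W1 cdc AWY Y_def in auto)
        then have AW: "A <#> W = Y" using BW cdc by auto
        show ?thesis using e1 AW BW fY Y_def by simp
      qed
    qed
    then show False using ZY nZW by blast
  qed
  have Z2Z: "Z \<subseteq> W \<inter> H" using ZW ZH by blast
  have sZ2: "subgroup (W \<inter> H) G" using nsub nZ2 by auto
  have "(Z <#> T) \<inter> (W \<inter> H) = Z <#> (T \<inter> (W \<inter> H))" by (rule dedekind[OF sZ sT sZ2 Z2Z])
  moreover have "Z <#> T = H" using commut_normal[OF sT nZ] TZH by simp
  moreover have "Z <#> (W \<inter> T) = Z" by (rule sm_absorb[OF sZ sZ1 Z1Z])
  ultimately have "W \<inter> H = Z" using Z2T by (simp add: inf.absorb_iff2 Int_commute)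
  moreover have "Z \<noteq> W \<inter> T"
  proof
    assume "Z = W \<inter> T"
    then have "T <#> Z = T" using sm_absorb[OF sT sZ1] by blast
    then show False using TZH cd by simp
  qed
  ultimately show "W \<inter> H = Z \<and> W \<inter> H \<noteq> W \<inter> T" by simp
qed

end


theorem lemma2:
  fixes G :: "('a, 'b) monoid_scheme"
    and f :: "('a, 'b) monoid_scheme \<Rightarrow> 'a set \<Rightarrow> 'a set \<Rightarrow> nat"
    and fq :: "'a set monoid \<Rightarrow> 'a set set \<Rightarrow> 'a set set \<Rightarrow> nat"
    and K H T Z1 Z2 :: "'a set"
  assumes f_level: "cff_level f"
    and fq_level: "cff_level fq"
    and f_link: "cff_link f fq"
    and grp: "group G"
    and fin: "finite (carrier G)"
    and K_nml: "normal K G"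
    and cf: "chief_factor G H T"
    and KT: "K \<subseteq> T"
    and Z1_def: "Z1 = {g \<in> carrier G. K #>\<^bsub>G\<^esub> g \<in> Zf (G Mod K) fq \<inter> quot_img G K T}"
    and Z2_def: "Z2 = {g \<in> carrier G. K #>\<^bsub>G\<^esub> g \<in> Zf (G Mod K) fq \<inter> quot_img G K H}"
  shows "(Z2 \<noteq> Z1 \<longleftrightarrow>
            f G H T = 1 \<and>
            (\<exists>Z. normal Z G \<and> Z1 \<subseteq> Z \<and>
               quot_img G Z1 T \<inter> quot_img G Z1 Z = {\<one>\<^bsub>G Mod Z1\<^esub>} \<and>
               quot_img G Z1 T <#>\<^bsub>G Mod Z1\<^esub> quot_img G Z1 Z = quot_img G Z1 H))
         \<and> (\<forall>Z. f G H T = 1 \<and> normal Z G \<and> Z1 \<subseteq> Z \<and>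
               quot_img G Z1 T \<inter> quot_img G Z1 Z = {\<one>\<^bsub>G Mod Z1\<^esub>} \<and>
               quot_img G Z1 T <#>\<^bsub>G Mod Z1\<^esub> quot_img G Z1 Z = quot_img G Z1 H
             \<longrightarrow> Z2 = Z)"
proof -
  interpret group G by (rule grp)
  interpret Kn: normal K G by (rule K_nml)
  note cd = chiefD[OF cf]
  define \<Gamma> where "\<Gamma> = G Mod K"
  have g\<Gamma>: "group \<Gamma>" unfolding \<Gamma>_def by (rule Kn.factorgroup_is_group)
  define \<pi> where "\<pi> = (\<lambda>g. K #>\<^bsub>G\<^esub> g)"
  have surj: "\<pi> ` carrier G = carrier \<Gamma>" unfolding \<Gamma>_def \<pi>_def by (simp add: carrier_FactGroup)
  have fin\<Gamma>: "finite (carrier \<Gamma>)" using surj fin by (metis finite_imageI)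
  have hom: "group_hom G \<Gamma> \<pi>"
    unfolding group_hom_def group_hom_axioms_def \<pi>_def \<Gamma>_def
    using grp Kn.factorgroup_is_group Kn.r_coset_hom_Mod by blast
  have qimg: "\<And>Xs. quot_img G K Xs = \<pi> ` Xs" unfolding quot_img_def \<pi>_def by simp
  define Zs where "Zs = Zf \<Gamma> fq"
  have hcZ: "hc \<Gamma> fq Zs" unfolding Zs_def by (rule group.Zf_props(1)[OF g\<Gamma> fq_level fin\<Gamma>])
  have maxZ: "\<And>Y. hc \<Gamma> fq Y \<Longrightarrow> Y \<subseteq> Zs" unfolding Zs_def by (rule group.Zf_props(2)[OF g\<Gamma> fq_level fin\<Gamma>])
  have sK: "subgroup K G" by (rule Kn.subgroup_axioms)
  have one\<Gamma>: "\<one>\<^bsub>\<Gamma>\<^esub> = K" unfolding \<Gamma>_def by simp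
  have piK: "\<pi> k = \<one>\<^bsub>\<Gamma>\<^esub>" if "k \<in> K" for k
    unfolding one\<Gamma> \<pi>_def using Kn.rcos_const[OF grp that] .
  have memb: "\<And>Xs g. subgroup Xs G \<Longrightarrow> K \<subseteq> Xs \<Longrightarrow> g \<in> carrier G \<Longrightarrow> (\<pi> g \<in> \<pi> ` Xs \<longleftrightarrow> g \<in> Xs)"
    unfolding \<pi>_def using rcos_in_img sK by blast
  have pre_img: "{g \<in> carrier G. \<pi> g \<in> \<pi> ` Xs} = Xs" if "subgroup Xs G" "K \<subseteq> Xs" for Xs
    using memb[OF that] subgroup.subset[OF that(1)] by blast
  have img_pre: "\<pi> ` {g \<in> carrier G. \<pi> g \<in> N} = N" if "N \<subseteq> carrier \<Gamma>" for N
  proof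
    show "\<pi> ` {g \<in> carrier G. \<pi> g \<in> N} \<subseteq> N" by blast
    show "N \<subseteq> \<pi> ` {g \<in> carrier G. \<pi> g \<in> N}"
    proof
      fix x assume x: "x \<in> N"
      then have "x \<in> \<pi> ` carrier G" using that surj by auto
      then obtain g where g: "g \<in> carrier G" "x = \<pi> g" by blast
      then show "x \<in> \<pi> ` {g \<in> carrier G. \<pi> g \<in> N}" using x by blast
    qed
  qed
  have pre_nml: "{g \<in> carrier G. \<pi> g \<in> N} \<lhd> G \<and> K \<subseteq> {g \<in> carrier G. \<pi> g \<in> N}" if "N \<lhd> \<Gamma>" for N
  proof
    show "{g \<in> carrier G. \<pi> g \<in> N} \<lhd> G" by (rule group_hom.pre_normal[OF hom that])
    have "\<one>\<^bsub>\<Gamma>\<^esub> \<in> N" using subgroup.one_closed[OF normal_imp_subgroup[OF that]] .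
    then show "K \<subseteq> {g \<in> carrier G. \<pi> g \<in> N}" using piK Kn.subset by auto
  qed
  have img_nml: "\<pi> ` Xs \<lhd> \<Gamma>" if "Xs \<lhd> G" for Xs
    by (rule normal.surj_hom_normal_subgroup[OF that hom surj])
  have Nc: "N \<subseteq> carrier \<Gamma>" if "N \<lhd> \<Gamma>" for N
    using that normal_imp_subgroup subgroup.subset by blast
  have corr: "chief_factor G A B \<longleftrightarrow> chief_factor \<Gamma> (\<pi> ` A) (\<pi> ` B)"
    if nA: "A \<lhd> G" and nB: "B \<lhd> G" and KB: "K \<subseteq> B" and BA: "B \<subseteq> A" for A B
  proof -
    have sA: "subgroup A G" and sB: "subgroup B G" using nA nB nsub by auto
    have KA: "K \<subseteq> A" using KB BA by blast
    have inj: "\<pi> ` B = \<pi> ` A \<longleftrightarrow> B = A" using pre_img[OF sA KA] pre_img[OF sB KB] by metis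
    show ?thesis
    proof
      assume c: "chief_factor G A B"
      have nob: "\<not> (\<exists>N. N \<lhd> \<Gamma> \<and> \<pi> ` B \<subset> N \<and> N \<subset> \<pi> ` A)"
      proof
        assume "\<exists>N. N \<lhd> \<Gamma> \<and> \<pi> ` B \<subset> N \<and> N \<subset> \<pi> ` A"
        then obtain N where N0: "N \<lhd> \<Gamma> \<and> \<pi> ` B \<subset> N \<and> N \<subset> \<pi> ` A" by (elim exE)
        note N = conjunct1[OF N0] conjunct1[OF conjunct2[OF N0]] conjunct2[OF conjunct2[OF N0]]
        define P where "P = {g \<in> carrier G. \<pi> g \<in> N}"
        have nP: "P \<lhd> G" and KP: "K \<subseteq> P" using pre_nml[OF N(1)] P_def by auto
        have BP: "B \<subseteq> P" unfolding P_def using N(2) subgroup.subset[OF sB] by blast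
        have PA: "P \<subseteq> A" unfolding P_def using N(3) memb[OF sA KA] by blast
        have PN: "\<pi> ` P = N" unfolding P_def by (rule img_pre[OF Nc[OF N(1)]])
        have "P = B \<or> P = A" by (rule chief_cases[OF c nP BP PA])
        then show False using PN N by blast
      qed
      show "chief_factor \<Gamma> (\<pi> ` A) (\<pi> ` B)"
        unfolding chief_factor_def using img_nml[OF nA] img_nml[OF nB] BA inj nob chiefD(4)[OF c]
        by blast
    next
      assume c: "chief_factor \<Gamma> (\<pi> ` A) (\<pi> ` B)"
      have nob: "\<not> (\<exists>P. P \<lhd> G \<and> B \<subset> P \<and> P \<subset> A)"
      proof
        assume "\<exists>P. P \<lhd> G \<and> B \<subset> P \<and> P \<subset> A"
        then obtain P where P0: "P \<lhd> G \<and> B \<subset> P \<and> P \<subset> A" by (elim exE)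
        note P = conjunct1[OF P0] conjunct1[OF conjunct2[OF P0]] conjunct2[OF conjunct2[OF P0]]
        have sP: "subgroup P G" using P nsub by auto
        have KP: "K \<subseteq> P" using KB P by blast
        have "\<pi> ` P = \<pi> ` B \<or> \<pi> ` P = \<pi> ` A"
          by (rule chief_cases[OF c img_nml[OF P(1)]]) (use P in blast)+
        then show False
        proof
          assume e: "\<pi> ` P = \<pi> ` B"
          have "P = {g \<in> carrier G. \<pi> g \<in> \<pi> ` P}" using pre_img[OF sP KP] by simp
          also have "\<dots> = {g \<in> carrier G. \<pi> g \<in> \<pi> ` B}" using e by simp
          also have "\<dots> = B" by (rule pre_img[OF sB KB])
          finally show False using P by blast
        next
          assume e: "\<pi> ` P = \<pi> ` A"
          have "P = {g \<in> carrier G. \<pi> g \<in> \<pi> ` P}" using pre_img[OF sP KP] by simp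
          also have "\<dots> = {g \<in> carrier G. \<pi> g \<in> \<pi> ` A}" using e by simp
          also have "\<dots> = A" by (rule pre_img[OF sA KA])
          finally show False using P by blast
        qed
      qed
      show "chief_factor G A B"
        unfolding chief_factor_def using nA nB BA inj nob chiefD(4)[OF c] by blast
    qed
  qed
  have link: "f G A B = fq \<Gamma> (\<pi> ` A) (\<pi> ` B)" if "chief_factor G A B" "K \<subseteq> B" for A B
    using f_link grp fin K_nml that unfolding cff_link_def \<Gamma>_def qimg[symmetric] by blast
  define W where "W = {g \<in> carrier G. \<pi> g \<in> Zs}"
  have nZs: "Zs \<lhd> \<Gamma>" using hcZ unfolding hc_def by blast
  have nW: "W \<lhd> G" and KW: "K \<subseteq> W" using pre_nml[OF nZs] W_def by auto
  have fW: "f G A B = 1" if c: "chief_factor G A B" and KB: "K \<subseteq> B" and AW: "A \<subseteq> W" for A B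
  proof -
    note cdA = chiefD[OF c]
    have c': "chief_factor \<Gamma> (\<pi> ` A) (\<pi> ` B)" using corr[OF cdA(1,2) KB cdA(3)] c by blast
    have "\<pi> ` A \<subseteq> Zs" using AW W_def by blast
    then have "fq \<Gamma> (\<pi> ` A) (\<pi> ` B) = 1" using hcZ c' unfolding hc_def by blast
    then show ?thesis using link[OF c KB] by simp
  qed
  have maxW: "Y \<subseteq> W" if nY: "Y \<lhd> G" and KY: "K \<subseteq> Y"
    and fY: "\<And>A B. chief_factor G A B \<Longrightarrow> K \<subseteq> B \<Longrightarrow> A \<subseteq> Y \<Longrightarrow> f G A B = 1" for Y
  proof -
    have sY: "subgroup Y G" using nY nsub by auto
    have "hc \<Gamma> fq (\<pi> ` Y)"
      unfolding hc_def
    proof (intro conjI allI impI)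
      show "\<pi> ` Y \<lhd> \<Gamma>" by (rule img_nml[OF nY])
      fix Ab Bb assume a: "chief_factor \<Gamma> Ab Bb \<and> Ab \<subseteq> \<pi> ` Y"
      note cdb = chiefD[OF conjunct1[OF a]]
      define A where "A = {g \<in> carrier G. \<pi> g \<in> Ab}"
      define B where "B = {g \<in> carrier G. \<pi> g \<in> Bb}"
      have nA: "A \<lhd> G" and KA: "K \<subseteq> A" using pre_nml[OF cdb(1)] A_def by auto
      have nB: "B \<lhd> G" and KB: "K \<subseteq> B" using pre_nml[OF cdb(2)] B_def by auto
      have BA: "B \<subseteq> A" using cdb(3) A_def B_def by blast
      have iA: "\<pi> ` A = Ab" unfolding A_def by (rule img_pre[OF Nc[OF cdb(1)]])
      have iB: "\<pi> ` B = Bb" unfolding B_def by (rule img_pre[OF Nc[OF cdb(2)]])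
      have cAB: "chief_factor G A B" using corr[OF nA nB KB BA] iA iB a by simp
      have AY: "A \<subseteq> Y" unfolding A_def using a memb[OF sY KY] by blast
      have "f G A B = 1" by (rule fY[OF cAB KB AY])
      then show "fq \<Gamma> Ab Bb = 1" using link[OF cAB KB] iA iB by simp
    qed
    then have "\<pi> ` Y \<subseteq> Zs" by (rule maxZ)
    then show ?thesis unfolding W_def using subgroup.subset[OF sY] by blast
  qed
  have sT: "subgroup T G" and sH: "subgroup H G" using cd nsub by auto
  have KH: "K \<subseteq> H" using KT cd(3) by blast
  have Zf_eq: "Zf (G Mod K) fq = Zs" unfolding Zs_def \<Gamma>_def ..
  have Z1W: "Z1 = W \<inter> T"
    unfolding Z1_def W_def Zf_eq qimg using memb[OF sT KT] subgroup.subset[OF sT] by (auto simp: \<pi>_def)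
  have Z2W: "Z2 = W \<inter> H"
    unfolding Z2_def W_def Zf_eq qimg using memb[OF sH KH] subgroup.subset[OF sH] by (auto simp: \<pi>_def)
  have fW': "\<forall>A B. chief_factor G A B \<and> K \<subseteq> B \<and> A \<subseteq> W \<longrightarrow> f G A B = 1"
    using fW by blast
  have maxW': "\<forall>Y. Y \<lhd> G \<and> K \<subseteq> Y \<and>
        (\<forall>A B. chief_factor G A B \<and> K \<subseteq> B \<and> A \<subseteq> Y \<longrightarrow> f G A B = 1) \<longrightarrow> Y \<subseteq> W"
  proof (intro allI impI)
    fix Y assume a: "Y \<lhd> G \<and> K \<subseteq> Y \<and>
        (\<forall>A B. chief_factor G A B \<and> K \<subseteq> B \<and> A \<subseteq> Y \<longrightarrow> f G A B = 1)"
    have fy: "\<And>A B. chief_factor G A B \<Longrightarrow> K \<subseteq> B \<Longrightarrow> A \<subseteq> Y \<Longrightarrow> f G A B = 1"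
      using a by blast
    show "Y \<subseteq> W" by (rule maxW[OF conjunct1[OF a] conjunct1[OF conjunct2[OF a]] fy])
  qed
  note co = core[OF f_level fin cf nW KW KT fW' maxW']
  have nZ1: "Z1 \<lhd> G" unfolding Z1W by (rule normal_subgroup_intersect[OF nW cd(2)])
  have Z1T: "Z1 \<subseteq> T" using Z1W by blast
  have trans: "(quot_img G Z1 T \<inter> quot_img G Z1 Z = {\<one>\<^bsub>G Mod Z1\<^esub>} \<and>
               quot_img G Z1 T <#>\<^bsub>G Mod Z1\<^esub> quot_img G Z1 Z = quot_img G Z1 H)
           \<longleftrightarrow> (T \<inter> Z = Z1 \<and> T <#>\<^bsub>G\<^esub> Z = H)" if nZ: "Z \<lhd> G" and Z1Z: "Z1 \<subseteq> Z" for Z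
  proof -
    have sZ: "subgroup Z G" using nZ nsub by auto
    have nTZ: "T <#>\<^bsub>G\<^esub> Z \<lhd> G" by (rule normal_subgroup_set_mult_closed[OF cd(2) nZ])
    have sTZ: "subgroup (T <#>\<^bsub>G\<^esub> Z) G" using nTZ nsub by auto
    have Z1TZ: "Z1 \<subseteq> T <#>\<^bsub>G\<^esub> Z" using Z1T sm_sub_left[OF sZ subgroup.subset[OF sT]] by blast
    have Z1H: "Z1 \<subseteq> H" using Z1T cd(3) by blast
    have "quot_img G Z1 T <#>\<^bsub>G Mod Z1\<^esub> quot_img G Z1 Z = quot_img G Z1 (T <#>\<^bsub>G\<^esub> Z)"
      by (rule qi_prod[OF nZ1 subgroup.subset[OF sT] subgroup.subset[OF sZ]])
    then show ?thesis
      using qi_int[OF nZ1 sT sZ Z1T Z1Z] qi_inj[OF nZ1 sTZ sH Z1TZ Z1H] by simp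
  qed
  show ?thesis
  proof (intro conjI allI impI)
    show "Z2 \<noteq> Z1 \<longleftrightarrow> f G H T = 1 \<and>
            (\<exists>Z. normal Z G \<and> Z1 \<subseteq> Z \<and>
               quot_img G Z1 T \<inter> quot_img G Z1 Z = {\<one>\<^bsub>G Mod Z1\<^esub>} \<and>
               quot_img G Z1 T <#>\<^bsub>G Mod Z1\<^esub> quot_img G Z1 Z = quot_img G Z1 H)"
    proof
      assume "Z2 \<noteq> Z1"
      then have "W \<inter> H \<noteq> W \<inter> T" using Z1W Z2W by simp
      then have r: "f G H T = 1 \<and> (W \<inter> H) \<lhd> G \<and> W \<inter> T \<subseteq> W \<inter> H \<and>
            T \<inter> (W \<inter> H) = W \<inter> T \<and> T <#>\<^bsub>G\<^esub> (W \<inter> H) = H" by (rule co(1))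
      then have c2: "Z2 \<lhd> G" "Z1 \<subseteq> Z2" "T \<inter> Z2 = Z1 \<and> T <#>\<^bsub>G\<^esub> Z2 = H" using Z1W Z2W by auto
      have fHT: "f G H T = 1" using r by (rule conjunct1)
      have q: "quot_img G Z1 T \<inter> quot_img G Z1 Z2 = {\<one>\<^bsub>G Mod Z1\<^esub>} \<and>
               quot_img G Z1 T <#>\<^bsub>G Mod Z1\<^esub> quot_img G Z1 Z2 = quot_img G Z1 H"
        by (rule trans[OF c2(1) c2(2), THEN iffD2, OF c2(3)])
      show "f G H T = 1 \<and>
            (\<exists>Z. normal Z G \<and> Z1 \<subseteq> Z \<and>
               quot_img G Z1 T \<inter> quot_img G Z1 Z = {\<one>\<^bsub>G Mod Z1\<^esub>} \<and>
               quot_img G Z1 T <#>\<^bsub>G Mod Z1\<^esub> quot_img G Z1 Z = quot_img G Z1 H)"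
        by (rule conjI[OF fHT], rule exI[where x=Z2], rule conjI[OF c2(1) conjI[OF c2(2) q]])
    next
      assume a: "f G H T = 1 \<and>
            (\<exists>Z. normal Z G \<and> Z1 \<subseteq> Z \<and>
               quot_img G Z1 T \<inter> quot_img G Z1 Z = {\<one>\<^bsub>G Mod Z1\<^esub>} \<and>
               quot_img G Z1 T <#>\<^bsub>G Mod Z1\<^esub> quot_img G Z1 Z = quot_img G Z1 H)"
      then obtain Z where Z: "Z \<lhd> G" "Z1 \<subseteq> Z"
        "quot_img G Z1 T \<inter> quot_img G Z1 Z = {\<one>\<^bsub>G Mod Z1\<^esub>} \<and>
         quot_img G Z1 T <#>\<^bsub>G Mod Z1\<^esub> quot_img G Z1 Z = quot_img G Z1 H" by blast
      have tz: "T \<inter> Z = Z1" "T <#>\<^bsub>G\<^esub> Z = H" using trans[OF Z(1,2)] Z(3) by auto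
      have h1: "W \<inter> T \<subseteq> Z" using Z(2) Z1W by simp
      have h2: "T \<inter> Z = W \<inter> T" using tz(1) Z1W by simp
      have "W \<inter> H = Z \<and> W \<inter> H \<noteq> W \<inter> T" by (rule co(2)[OF conjunct1[OF a] Z(1) h1 h2 tz(2)])
      then have "W \<inter> H \<noteq> W \<inter> T" by (rule conjunct2)
      then show "Z2 \<noteq> Z1" by (simp add: Z1W Z2W)
    qed
  next
    fix Z assume a: "f G H T = 1 \<and> normal Z G \<and> Z1 \<subseteq> Z \<and>
               quot_img G Z1 T \<inter> quot_img G Z1 Z = {\<one>\<^bsub>G Mod Z1\<^esub>} \<and>
               quot_img G Z1 T <#>\<^bsub>G Mod Z1\<^esub> quot_img G Z1 Z = quot_img G Z1 H"
    have nZ: "Z \<lhd> G" and Z1Z: "Z1 \<subseteq> Z" using a by auto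
    have tz: "T \<inter> Z = Z1" "T <#>\<^bsub>G\<^esub> Z = H" using trans[OF nZ Z1Z] a by auto
    have h1: "W \<inter> T \<subseteq> Z" using Z1Z Z1W by simp
    have h2: "T \<inter> Z = W \<inter> T" using tz(1) Z1W by simp
    have "W \<inter> H = Z \<and> W \<inter> H \<noteq> W \<inter> T" by (rule co(2)[OF conjunct1[OF a] nZ h1 h2 tz(2)])
    then show "Z2 = Z" using Z2W by simp
  qed
qed


end
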